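(* Let $(X,d)$, $(\Lambda,d_\Lambda)$ be compact metric spaces, $\tau:\Lambda\times X\to X$ continuous and $q:X\to\mathcal P(\Lambda)$ continuous. Assume: (M1) there is $s>0$ such that $\int_\Lambda|f(\tau(\lambda,x))-f(\tau(\lambda,y))|\,dq_x(\lambda)\le s\,d(x,y)$ for all $x,y\in X$ and all $f\in\mathrm{Lip}_1(X)$; (H2) there is $r\ge0$ with $d(\tau(\lambda_1,x),\tau(\lambda_2,x))\le r\,d_\Lambda(\lambda_1,\lambda_2)$ for all $\lambda_1,\lambda_2\in\Lambda$, $x\in X$; (H3) there is $t\ge0$ with $d_{MK}(q_x,q_y)\le t\,d(x,y)$ for all $x,y\in X$. Then $T_q$ is $(s+r t)$-Lipschitz with respect to $d_{MK}$ on $\mathcal P(X)$.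
   Context: $\mathcal{P}(Y)$ is the set of Borel probability measures on a compact metric space $Y$, with $d_{MK}(\mu,\nu)=\sup_{f\in \mathrm{Lip}_1(Y)}\{\int f\,d\mu-\int f\,d\nu\}$, where $\mathrm{Lip}_1(Y)$ is the set of real $1$-Lipschitz functions on $Y$. The transfer operator is $B_q(f)(x)=\int_\Lambda f(\tau(\lambda,x))\,dq_x(\lambda)$ and the Markov operator $T_q$ on $\mathcal P(X)$ is defined by $\int f\,dT_q(\mu)=\int B_q(f)\,d\mu$ for $f\in C(X)$. *)

theory Defs
  imports "HOL-Probability.Probability"
begin

definition prob_borel :: "'a::metric_space measure \<Rightarrow> bool" where
  "prob_borel M \<longleftrightarrow> prob_space M \<and> sets M = sets borel"

definition dMK :: "'a::metric_space measure \<Rightarrow> 'a measure \<Rightarrow> real" where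
  "dMK \<mu> \<nu> = Sup {(\<integral>y. f y \<partial>\<mu>) - (\<integral>y. f y \<partial>\<nu>) | f :: 'a \<Rightarrow> real. 1-lipschitz_on UNIV f}"

definition Bq :: "('x \<Rightarrow> 'l::metric_space measure) \<Rightarrow> ('l \<Rightarrow> 'x \<Rightarrow> 'x) \<Rightarrow> ('x \<Rightarrow> real) \<Rightarrow> 'x \<Rightarrow> real" where
  "Bq q \<tau> f x = (\<integral>l. f (\<tau> l x) \<partial>(q x))"

definition Tq :: "('x::metric_space \<Rightarrow> 'l::metric_space measure) \<Rightarrow> ('l \<Rightarrow> 'x \<Rightarrow> 'x) \<Rightarrow> 'x measure \<Rightarrow> 'x measure" where
  "Tq q \<tau> \<mu> = (THE \<nu>. prob_borel \<nu> \<and>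
     (\<forall>f :: 'x \<Rightarrow> real. continuous_on UNIV f \<longrightarrow> (\<integral>x. f x \<partial>\<nu>) = (\<integral>x. Bq q \<tau> f x \<partial>\<mu>)))"

definition weak_continuous :: "('x::topological_space \<Rightarrow> 'l::metric_space measure) \<Rightarrow> bool" where
  "weak_continuous q \<longleftrightarrow> (\<forall>f :: 'l \<Rightarrow> real. continuous_on UNIV f \<longrightarrow>
      continuous_on UNIV (\<lambda>x. \<integral>l. f l \<partial>(q x)))"

end

theory Submission
  imports Defs
begin

definition gap :: "'a::metric_space set \<Rightarrow> nat \<Rightarrow> 'a \<Rightarrow> real" where
  "gap U n x = min 1 (real n * infdist x (- U))"

lemma gap_lip: "(real n)-lipschitz_on UNIV (gap U n)"
proof (rule lipschitz_onI)
  fix x y :: 'a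
  have "\<bar>real n * infdist x (- U) - real n * infdist y (- U)\<bar> \<le> real n * dist x y"
    using infdist_triangle_abs[of x "-U" y]
    by (metis abs_mult abs_of_nat mult_left_mono of_nat_0_le_iff right_diff_distrib)
  then show "dist (gap U n x) (gap U n y) \<le> real n * dist x y"
    unfolding gap_def dist_real_def by (simp add: abs_le_iff min_def split: if_splits) linarith?
qed simp

lemma gap_cont: "continuous_on UNIV (gap U n)"
  using gap_lip lipschitz_on_continuous_on by blast

lemma gap_bnd: "0 \<le> gap U n x" "gap U n x \<le> 1"
  unfolding gap_def by (auto simp: infdist_nonneg)

lemma gap_inc: "incseq (\<lambda>n. ennreal (gap U n x))"
  unfolding incseq_def gap_def
  by (auto intro!: ennreal_leI min.mono mult_right_mono infdist_nonneg)

lemma gap_SUP: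
  assumes "open U" "U \<noteq> UNIV"
  shows "(SUP n. ennreal (gap U n x)) = indicator U x"
proof (cases "x \<in> U")
  case True
  have "0 < infdist x (- U)"
    using assms True by (intro infdist_pos_not_in_closed) auto
  then obtain n where n: "1 < real n * infdist x (- U)"
    using ex_less_of_nat_mult by blast
  have "(SUP n. ennreal (gap U n x)) = 1"
  proof (rule antisym)
    show "(SUP n. ennreal (gap U n x)) \<le> 1" by (rule SUP_least) (simp add: gap_bnd)
    have "gap U n x = 1" using n unfolding gap_def by simp
    then show "1 \<le> (SUP n. ennreal (gap U n x))"
      by (intro SUP_upper2[of n]) auto
  qed
  then show ?thesis using True by simp
next
  case False
  then show ?thesis by (simp add: gap_def)
qed


lemma cont_bounded:
  fixes f :: "'a::metric_space \<Rightarrow> real"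
  assumes "compact (UNIV::'a set)" "continuous_on UNIV f"
  obtains B where "\<And>x. \<bar>f x\<bar> \<le> B"
proof -
  have "compact (f ` UNIV)" using assms compact_continuous_image by blast
  then obtain B where "\<forall>y\<in>f ` UNIV. norm y \<le> B"
    using compact_imp_bounded bounded_iff by metis
  then show ?thesis using that by auto
qed

lemma pb_integrable:
  fixes f :: "'a::metric_space \<Rightarrow> real"
  assumes "compact (UNIV::'a set)" "continuous_on UNIV f" "prob_borel \<mu>"
  shows "integrable \<mu> f"
proof -
  interpret prob_space \<mu> using assms(3) unfolding prob_borel_def by simp
  obtain B where B: "\<And>x. \<bar>f x\<bar> \<le> B" using cont_bounded assms(1,2) by blast
  have "f \<in> borel_measurable borel"
    using assms(2) by (rule borel_measurable_continuous_onI)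
  moreover have "sets \<mu> = sets borel" using assms(3) unfolding prob_borel_def by simp
  ultimately have m: "f \<in> borel_measurable \<mu>"
    using measurable_cong_sets[of \<mu> borel borel borel] by simp
  show ?thesis
    by (rule integrable_const_bound[where B=B]) (use B m in auto)
qed

lemma lip_cont: "C-lipschitz_on UNIV f \<Longrightarrow> continuous_on UNIV f"
  using lipschitz_on_continuous_on by blast

lemma dMK_upper:
  fixes f :: "'a::metric_space \<Rightarrow> real"
  assumes "compact (UNIV::'a set)" "prob_borel \<mu>" "prob_borel \<nu>" "1-lipschitz_on UNIV f"
  shows "(\<integral>y. f y \<partial>\<mu>) - (\<integral>y. f y \<partial>\<nu>) \<le> dMK \<mu> \<nu>"
proof -
  interpret m: prob_space \<mu> using assms(2) unfolding prob_borel_def by simp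
  interpret n: prob_space \<nu> using assms(3) unfolding prob_borel_def by simp
  obtain D where D: "\<And>x. dist (undefined::'a) x \<le> D"
    using compact_imp_bounded[OF assms(1)] bounded_any_center by (metis UNIV_I)
  have bd: "(\<integral>y. g y \<partial>\<mu>) - (\<integral>y. g y \<partial>\<nu>) \<le> 2 * D" if g: "1-lipschitz_on UNIV g" for g :: "'a \<Rightarrow> real"
  proof -
    have cg: "continuous_on UNIV g" using g lip_cont by blast
    have le: "\<bar>g x - g undefined\<bar> \<le> D" for x
      using lipschitz_onD[OF g, of x undefined] D[of x] by (simp add: dist_real_def dist_commute)
    have le1: "g x \<le> g undefined + D" "g undefined - D \<le> g x" for x
      using le[of x] by (auto simp: abs_le_iff)
    have "(\<integral>y. g y \<partial>\<mu>) \<le> (\<integral>y. g undefined + D \<partial>\<mu>)"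
      using le1 by (intro integral_mono pb_integrable[OF assms(1) cg assms(2)]) auto
    also have "\<dots> = g undefined + D" by (simp add: m.prob_space)
    finally have 1: "(\<integral>y. g y \<partial>\<mu>) \<le> g undefined + D" .
    have "(\<integral>y. g undefined - D \<partial>\<nu>) \<le> (\<integral>y. g y \<partial>\<nu>)"
      using le1 by (intro integral_mono pb_integrable[OF assms(1) cg assms(3)]) auto
    then have 2: "g undefined - D \<le> (\<integral>y. g y \<partial>\<nu>)" by (simp add: n.prob_space)
    show ?thesis using 1 2 by linarith
  qed
  show ?thesis unfolding dMK_def
    by (rule cSup_upper) (use assms(4) bd in \<open>auto intro!: bdd_aboveI[where M="2*D"]\<close>)
qed

lemma emeasure_open_SUP:
  fixes \<mu> :: "'a::metric_space measure"
  assumes "prob_borel \<mu>" "open U" "U \<noteq> UNIV" "compact (UNIV::'a set)"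
  shows "emeasure \<mu> U = (SUP n. ennreal (\<integral>x. gap U n x \<partial>\<mu>))"
proof -
  have sets: "sets \<mu> = sets borel" using assms(1) unfolding prob_borel_def by simp
  have meas: "gap U n \<in> borel_measurable \<mu>" for n
    using borel_measurable_continuous_onI[OF gap_cont] unfolding measurable_cong_sets[OF sets refl] .
  have "U \<in> sets \<mu>" using sets assms(2) by simp
  then have "emeasure \<mu> U = (\<integral>\<^sup>+x. indicator U x \<partial>\<mu>)" by simp
  also have "\<dots> = (\<integral>\<^sup>+x. (SUP n. ennreal (gap U n x)) \<partial>\<mu>)"
    using gap_SUP[OF assms(2,3)] by simp
  also have "\<dots> = (SUP n. (\<integral>\<^sup>+x. ennreal (gap U n x) \<partial>\<mu>))"
    by (rule nn_integral_monotone_convergence_SUP) (use gap_inc meas in \<open>auto simp: incseq_def le_fun_def\<close>)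
  also have "\<dots> = (SUP n. ennreal (\<integral>x. gap U n x \<partial>\<mu>))"
    by (intro SUP_cong refl nn_integral_eq_integral pb_integrable[OF assms(4) gap_cont assms(1)])
       (auto simp: gap_bnd)
  finally show ?thesis .
qed

lemma pb_unique:
  fixes \<mu> \<nu> :: "'a::metric_space measure"
  assumes "compact (UNIV::'a set)" "prob_borel \<mu>" "prob_borel \<nu>"
    and eq: "\<And>f::'a\<Rightarrow>real. continuous_on UNIV f \<Longrightarrow> (\<integral>x. f x \<partial>\<mu>) = (\<integral>x. f x \<partial>\<nu>)"
  shows "\<mu> = \<nu>"
proof (rule measure_eqI_generator_eq[where E="{S. open S}" and \<Omega>=UNIV and A="\<lambda>_. UNIV"])
  interpret m: prob_space \<mu> using assms(2) unfolding prob_borel_def by simp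
  interpret n: prob_space \<nu> using assms(3) unfolding prob_borel_def by simp
  have sm: "space \<mu> = UNIV" "space \<nu> = UNIV" using assms(2,3) unfolding prob_borel_def
    by (auto dest!: sets_eq_imp_space_eq)
  show "Int_stable {S::'a set. open S}" by (auto simp: Int_stable_def)
  show "{S::'a set. open S} \<subseteq> Pow UNIV" by auto
  show "sets \<mu> = sigma_sets UNIV {S. open S}" "sets \<nu> = sigma_sets UNIV {S. open S}"
    using assms(2,3) unfolding prob_borel_def by (auto simp: sets_borel)
  show "range (\<lambda>_. UNIV) \<subseteq> {S::'a set. open S}" "(\<Union>i. UNIV) = (UNIV::'a set)" by auto
  show "emeasure \<mu> UNIV \<noteq> \<infinity>" for i::nat using m.emeasure_space_1 sm by simp
  fix X :: "'a set" assume "X \<in> {S. open S}"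
  then have X: "open X" by simp
  show "emeasure \<mu> X = emeasure \<nu> X"
  proof (cases "X = UNIV")
    case True then show ?thesis using m.emeasure_space_1 n.emeasure_space_1 sm by simp
  next
    case False
    show ?thesis
      using emeasure_open_SUP[OF assms(2) X False assms(1)] emeasure_open_SUP[OF assms(3) X False assms(1)]
        eq[OF gap_cont] by simp
  qed
qed


lemma Bq_lip:
  fixes \<tau> :: "'l::metric_space \<Rightarrow> 'x::metric_space \<Rightarrow> 'x"
    and q :: "'x \<Rightarrow> 'l measure"
    and s r t :: real
  assumes cX: "compact (UNIV :: 'x set)"
    and cL: "compact (UNIV :: 'l set)"
    and tau_cont: "continuous_on UNIV (\<lambda>p :: 'l \<times> 'x. \<tau> (fst p) (snd p))"
    and q_prob: "\<And>x. prob_borel (q x)"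
    and M1: "s > 0"
      "\<And>x y f. 1-lipschitz_on UNIV (f :: 'x \<Rightarrow> real) \<Longrightarrow>
         (\<integral>l. \<bar>f (\<tau> l x) - f (\<tau> l y)\<bar> \<partial>(q x)) \<le> s * dist x y"
    and H2: "r \<ge> 0" "\<And>l1 l2 x. dist (\<tau> l1 x) (\<tau> l2 x) \<le> r * dist l1 l2"
    and H3: "t \<ge> 0" "\<And>x y. dMK (q x) (q y) \<le> t * dist x y"
    and f: "1-lipschitz_on UNIV f"
  shows "(s + r * t)-lipschitz_on UNIV (Bq q \<tau> f)"
proof -
  have ctau: "continuous_on UNIV (\<lambda>l. \<tau> l x)" for x
    using continuous_on_compose2[OF tau_cont, of UNIV "\<lambda>l. (l, x)"]
    by (simp add: continuous_on_Pair continuous_on_id continuous_on_const)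
  have cf: "continuous_on UNIV f" using f lip_cont by blast
  have cft: "continuous_on UNIV (\<lambda>l. f (\<tau> l x))" for x
    using continuous_on_compose2[OF cf ctau] by auto
  have int: "integrable (q z) (\<lambda>l. f (\<tau> l x))" for x z
    by (rule pb_integrable[OF cL cft q_prob])
  have one: "Bq q \<tau> f x - Bq q \<tau> f y \<le> (s + r * t) * dist x y" for x y
  proof -
    have "Bq q \<tau> f x - Bq q \<tau> f y = (\<integral>l. f (\<tau> l x) - f (\<tau> l y) \<partial>q x)
        + ((\<integral>l. f (\<tau> l y) \<partial>q x) - (\<integral>l. f (\<tau> l y) \<partial>q y))"
      unfolding Bq_def using int by (simp add: integral_diff)
    also have "(\<integral>l. f (\<tau> l x) - f (\<tau> l y) \<partial>q x) \<le> (\<integral>l. \<bar>f (\<tau> l x) - f (\<tau> l y)\<bar> \<partial>q x)"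
      using int by (intro integral_mono) auto
    also have "\<dots> \<le> s * dist x y" by (rule M1(2)[OF f])
    also have "(\<integral>l. f (\<tau> l y) \<partial>q x) - (\<integral>l. f (\<tau> l y) \<partial>q y) \<le> r * t * dist x y"
    proof (cases "r = 0")
      case True
      have "\<tau> l y = \<tau> undefined y" for l using H2(2)[of l y undefined] True by simp
      then have "(\<lambda>l. f (\<tau> l y)) = (\<lambda>l. f (\<tau> undefined y))" by metis
      moreover have "prob_space (q z)" for z using q_prob unfolding prob_borel_def by simp
      ultimately show ?thesis using True by (simp add: prob_space.prob_space)
    next
      case False
      then have rp: "r > 0" using H2(1) by simp
      have h: "1-lipschitz_on UNIV (\<lambda>l. f (\<tau> l y) / r)"
      proof (rule lipschitz_onI)
        fix a b :: 'l
        have "dist (f (\<tau> a y)) (f (\<tau> b y)) \<le> r * dist a b"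
          using lipschitz_onD[OF f, of "\<tau> a y" "\<tau> b y"] H2(2)[of a y b] by simp
        then show "dist (f (\<tau> a y) / r) (f (\<tau> b y) / r) \<le> 1 * dist a b"
          using rp by (simp add: dist_real_def diff_divide_distrib[symmetric] pos_divide_le_eq mult.commute)
      qed simp
      have "((\<integral>l. f (\<tau> l y) \<partial>q x) - (\<integral>l. f (\<tau> l y) \<partial>q y)) / r
          = (\<integral>l. f (\<tau> l y) / r \<partial>q x) - (\<integral>l. f (\<tau> l y) / r \<partial>q y)"
        by (simp add: diff_divide_distrib)
      also have "\<dots> \<le> dMK (q x) (q y)" by (rule dMK_upper[OF cL q_prob q_prob h])
      also have "\<dots> \<le> t * dist x y" by (rule H3(2))
      finally show ?thesis using rp by (simp add: pos_divide_le_eq mult.assoc mult.commute)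
    qed
    finally show ?thesis by (simp add: algebra_simps)
  qed
  show ?thesis
  proof (rule lipschitz_onI)
    fix x y
    show "dist (Bq q \<tau> f x) (Bq q \<tau> f y) \<le> (s + r * t) * dist x y"
      using one[of x y] one[of y x] by (simp add: dist_real_def dist_commute abs_le_iff)
  qed (use M1(1) H2(1) H3(1) in simp)
qed


lemma lip_scale:
  fixes f :: "'a::metric_space \<Rightarrow> real"
  assumes "C-lipschitz_on UNIV f" "C > 0"
  shows "1-lipschitz_on UNIV (\<lambda>x. f x / C)"
proof (rule lipschitz_onI)
  fix a b :: 'a
  have "dist (f a) (f b) \<le> C * dist a b" using lipschitz_onD[OF assms(1)] by simp
  then show "dist (f a / C) (f b / C) \<le> 1 * dist a b"
    using assms(2) by (simp add: dist_real_def diff_divide_distrib[symmetric] pos_divide_le_eq mult.commute)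
qed simp

lemma final_step:
  fixes \<mu> \<nu> Tm Tn :: "'x::metric_space measure" and B :: "('x \<Rightarrow> real) \<Rightarrow> 'x \<Rightarrow> real"
  assumes cX: "compact (UNIV :: 'x set)" and mu: "prob_borel \<mu>" and nu: "prob_borel \<nu>"
    and Cpos: "C > 0"
    and BL: "\<And>f. 1-lipschitz_on UNIV f \<Longrightarrow> C-lipschitz_on UNIV (B f)"
    and Tm: "\<And>f. continuous_on UNIV f \<Longrightarrow> (\<integral>x. f x \<partial>Tm) = (\<integral>x. B f x \<partial>\<mu>)"
    and Tn: "\<And>f. continuous_on UNIV f \<Longrightarrow> (\<integral>x. f x \<partial>Tn) = (\<integral>x. B f x \<partial>\<nu>)"
  shows "dMK Tm Tn \<le> C * dMK \<mu> \<nu>"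
  unfolding dMK_def[of Tm]
proof (rule cSup_least)
  have l0: "1-lipschitz_on UNIV (\<lambda>_::'x. 0::real)"
    by (rule lipschitz_on_mono[OF lipschitz_on_constant]) auto
  have "\<exists>f::'x\<Rightarrow>real. (0::real) = (\<integral>y. f y \<partial>Tm) - (\<integral>y. f y \<partial>Tn) \<and> 1-lipschitz_on UNIV f"
    by (rule exI[where x="\<lambda>_::'x. 0::real"]) (simp add: l0)
  then show "{(\<integral>y. f y \<partial>Tm) - (\<integral>y. f y \<partial>Tn) |f :: 'x \<Rightarrow> real. 1-lipschitz_on UNIV f} \<noteq> {}"
    by (simp; blast)
  fix z assume "z \<in> {(\<integral>y. f y \<partial>Tm) - (\<integral>y. f y \<partial>Tn) |f :: 'x \<Rightarrow> real. 1-lipschitz_on UNIV f}"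
  then obtain f :: "'x \<Rightarrow> real" where f: "1-lipschitz_on UNIV f"
    and z: "z = (\<integral>y. f y \<partial>Tm) - (\<integral>y. f y \<partial>Tn)" by auto
  have cf: "continuous_on UNIV f" using f lip_cont by blast
  have g: "1-lipschitz_on UNIV (\<lambda>x. B f x / C)"
    by (rule lip_scale[OF BL[OF f] Cpos])
  have "z = (\<integral>x. B f x \<partial>\<mu>) - (\<integral>x. B f x \<partial>\<nu>)"
    using z Tm[OF cf] Tn[OF cf] by simp
  also have "\<dots> = C * ((\<integral>x. B f x / C \<partial>\<mu>) - (\<integral>x. B f x / C \<partial>\<nu>))"
  proof -
    have i1: "(\<integral>x. B f x / C \<partial>\<mu>) = (\<integral>x. B f x \<partial>\<mu>) / C" by (rule integral_divide_zero)
    have i2: "(\<integral>x. B f x / C \<partial>\<nu>) = (\<integral>x. B f x \<partial>\<nu>) / C" by (rule integral_divide_zero)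
    show ?thesis unfolding i1 i2 using Cpos by (simp add: right_diff_distrib)
  qed
  also have "\<dots> \<le> C * dMK \<mu> \<nu>"
    by (rule mult_left_mono[OF dMK_upper[OF cX mu nu g]]) (use Cpos in simp)
  finally show "z \<le> C * dMK \<mu> \<nu>" .
qed

theorem mainTheorem5:
  fixes \<tau> :: "'l::metric_space \<Rightarrow> 'x::metric_space \<Rightarrow> 'x"
    and q :: "'x \<Rightarrow> 'l measure"
    and s r t :: real
  assumes cX: "compact (UNIV :: 'x set)"
    and cL: "compact (UNIV :: 'l set)"
    and tau_cont: "continuous_on UNIV (\<lambda>p :: 'l \<times> 'x. \<tau> (fst p) (snd p))"
    and q_prob: "\<And>x. prob_borel (q x)"
    and q_cont: "weak_continuous q"
    and M1: "s > 0"
      "\<And>x y f. 1-lipschitz_on UNIV (f :: 'x \<Rightarrow> real) \<Longrightarrow>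
         (\<integral>l. \<bar>f (\<tau> l x) - f (\<tau> l y)\<bar> \<partial>(q x)) \<le> s * dist x y"
    and H2: "r \<ge> 0" "\<And>l1 l2 x. dist (\<tau> l1 x) (\<tau> l2 x) \<le> r * dist l1 l2"
    and H3: "t \<ge> 0" "\<And>x y. dMK (q x) (q y) \<le> t * dist x y"
  shows "\<forall>\<mu> \<nu>. prob_borel \<mu> \<and> prob_borel \<nu> \<longrightarrow>
           dMK (Tq q \<tau> \<mu>) (Tq q \<tau> \<nu>) \<le> (s + r * t) * dMK \<mu> \<nu>"
proof -
  have BL: "(s + r * t)-lipschitz_on UNIV (Bq q \<tau> f)" if "1-lipschitz_on UNIV f" for f
    by (rule Bq_lip[OF cX cL tau_cont q_prob M1(1) M1(2) H2(1) H2(2) H3(1) H3(2) that])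
  have Cpos: "s + r * t > 0" using M1(1) H2(1) H3(1) by (simp add: add_pos_nonneg)
  have ctau: "continuous_on UNIV (\<lambda>l. \<tau> l x)" for x
    using continuous_on_compose2[OF tau_cont, of UNIV "\<lambda>l. (l, x)"]
    by (simp add: continuous_on_Pair continuous_on_id continuous_on_const)
  have mtau: "(\<lambda>l. \<tau> l x) \<in> measurable (q x) borel" for x
  proof -
    have sx: "sets (q x) = sets borel" using q_prob unfolding prob_borel_def by simp
    show ?thesis using borel_measurable_continuous_onI[OF ctau]
      unfolding measurable_cong_sets[OF sx refl] .
  qed
  define K where "K x = distr (q x) borel (\<lambda>l. \<tau> l x)" for x
  have Kpb: "prob_borel (K x)" for x
  proof -
    interpret prob_space "q x" using q_prob unfolding prob_borel_def by simp
    show ?thesis unfolding K_def prob_borel_def using prob_space_distr[OF mtau] by simp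
  qed
  have Kint: "(\<integral>y. f y \<partial>K x) = Bq q \<tau> f x" if "continuous_on UNIV f" for f :: "'x \<Rightarrow> real" and x
    unfolding K_def Bq_def
    by (rule integral_distr[OF mtau borel_measurable_continuous_onI[OF that]])
  have Bcont: "continuous_on UNIV (Bq q \<tau> f)" if "C-lipschitz_on UNIV f" "C > 0" for f C
  proof -
    have "Bq q \<tau> f = (\<lambda>x. C * Bq q \<tau> (\<lambda>y. f y / C) x)"
      using that(2) by (auto simp: Bq_def fun_eq_iff)
    moreover have "continuous_on UNIV (Bq q \<tau> (\<lambda>y. f y / C))"
      using BL[OF lip_scale[OF that]] lip_cont by blast
    ultimately show ?thesis by (metis continuous_on_mult_left)
  qed
  have gapB: "Bq q \<tau> (gap U n) \<in> borel_measurable borel" for U n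
  proof -
    have "(real n + 1)-lipschitz_on UNIV (gap U n)"
      by (rule lipschitz_on_mono[OF gap_lip]) auto
    then show ?thesis by (intro borel_measurable_continuous_onI Bcont[of "real n + 1"]) auto
  qed
  have Kmeas: "K \<in> borel \<rightarrow>\<^sub>M prob_algebra borel"
  proof (rule measurable_prob_algebra_generated[where G="{S. open S}" and \<Omega>=UNIV])
    show "sets borel = sigma_sets UNIV {S::'x set. open S}" by (simp add: sets_borel)
    show "Int_stable {S::'x set. open S}" by (auto simp: Int_stable_def)
    show "{S::'x set. open S} \<subseteq> Pow UNIV" by auto
    show "prob_space (K a)" "sets (K a) = sets borel" for a using Kpb[of a] unfolding prob_borel_def by auto
    fix A :: "'x set" assume "A \<in> {S. open S}"
    then have A: "open A" by simp
    show "(\<lambda>a. emeasure (K a) A) \<in> borel_measurable borel"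
    proof (cases "A = UNIV")
      case True
      have "emeasure (K a) A = 1" for a
      proof -
        interpret prob_space "K a" using Kpb[of a] unfolding prob_borel_def by simp
        have "space (K a) = UNIV" using Kpb[of a] unfolding prob_borel_def
          by (auto dest!: sets_eq_imp_space_eq)
        then show ?thesis using emeasure_space_1 True by simp
      qed
      then show ?thesis by simp
    next
      case False
      have "emeasure (K a) A = (SUP n. ennreal (Bq q \<tau> (gap A n) a))" for a
        using emeasure_open_SUP[OF Kpb A False cX] Kint[OF gap_cont] by simp
      moreover have "(\<lambda>a. SUP n. ennreal (Bq q \<tau> (gap A n) a)) \<in> borel_measurable borel"
        using gapB by measurable
      ultimately show ?thesis by simp
    qed
  qed
  have Tprop: "prob_borel (Tq q \<tau> \<mu>) \<and> (\<forall>f :: 'x \<Rightarrow> real. continuous_on UNIV f \<longrightarrow>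
      (\<integral>x. f x \<partial>Tq q \<tau> \<mu>) = (\<integral>x. Bq q \<tau> f x \<partial>\<mu>))" if mu: "prob_borel \<mu>" for \<mu>
  proof -
    interpret pm: prob_space \<mu> using mu unfolding prob_borel_def by simp
    have musp: "\<mu> \<in> space (prob_algebra borel)"
      using mu unfolding prob_borel_def by (simp add: space_prob_algebra)
    define \<nu>0 where "\<nu>0 = \<mu> \<bind> K"
    have P: "prob_borel \<nu>0 \<and> (\<forall>f :: 'x \<Rightarrow> real. continuous_on UNIV f \<longrightarrow>
      (\<integral>x. f x \<partial>\<nu>0) = (\<integral>x. Bq q \<tau> f x \<partial>\<mu>))"
    proof (intro conjI allI impI)
      show "prob_borel \<nu>0" unfolding prob_borel_def \<nu>0_def
        using prob_space_bind'[OF musp Kmeas] sets_bind'[OF musp Kmeas] by simp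
      fix f :: "'x \<Rightarrow> real" assume cf: "continuous_on UNIV f"
      obtain B where B: "\<And>x. \<bar>f x\<bar> \<le> B" using cont_bounded[OF cX cf] by blast
      have Km: "K \<in> measurable \<mu> (subprob_algebra borel)"
      proof -
        have sm: "sets \<mu> = sets borel" using mu unfolding prob_borel_def by simp
        show ?thesis unfolding measurable_cong_sets[OF sm refl] by (rule measurable_prob_algebraD[OF Kmeas])
      qed
      have "(\<integral>x. f x \<partial>\<nu>0) = (\<integral>x. (\<integral>y. f y \<partial>K x) \<partial>\<mu>)"
        unfolding \<nu>0_def
        by (rule integral_bind[OF borel_measurable_continuous_onI[OF cf] _ Km, where B=B and B'=1])
           (use B pm.finite_measure_axioms Kpb in \<open>auto simp: prob_borel_def prob_space.emeasure_space_1\<close>)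
      also have "\<dots> = (\<integral>x. Bq q \<tau> f x \<partial>\<mu>)" using Kint[OF cf] by simp
      finally show "(\<integral>x. f x \<partial>\<nu>0) = (\<integral>x. Bq q \<tau> f x \<partial>\<mu>)" .
    qed
    have "\<exists>!\<nu>. prob_borel \<nu> \<and> (\<forall>f :: 'x \<Rightarrow> real. continuous_on UNIV f \<longrightarrow>
      (\<integral>x. f x \<partial>\<nu>) = (\<integral>x. Bq q \<tau> f x \<partial>\<mu>))"
    proof (rule ex1I[of _ \<nu>0])
      show "prob_borel \<nu>0 \<and> (\<forall>f :: 'x \<Rightarrow> real. continuous_on UNIV f \<longrightarrow>
        (\<integral>x. f x \<partial>\<nu>0) = (\<integral>x. Bq q \<tau> f x \<partial>\<mu>))" by (rule P)
      fix \<nu> assume H: "prob_borel \<nu> \<and> (\<forall>f :: 'x \<Rightarrow> real. continuous_on UNIV f \<longrightarrow>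
        (\<integral>x. f x \<partial>\<nu>) = (\<integral>x. Bq q \<tau> f x \<partial>\<mu>))"
      show "\<nu> = \<nu>0"
      proof (rule pb_unique[OF cX])
        show "prob_borel \<nu>" using H by blast
        show "prob_borel \<nu>0" using P by blast
        fix f :: "'x \<Rightarrow> real" assume cf: "continuous_on UNIV f"
        have e1: "(\<integral>x. f x \<partial>\<nu>) = (\<integral>x. Bq q \<tau> f x \<partial>\<mu>)" using H cf by blast
        have e2: "(\<integral>x. f x \<partial>\<nu>0) = (\<integral>x. Bq q \<tau> f x \<partial>\<mu>)" using P cf by blast
        show "(\<integral>x. f x \<partial>\<nu>) = (\<integral>x. f x \<partial>\<nu>0)" using e1 e2 by simp
      qed
    qed
    then show ?thesis unfolding Tq_def by (rule theI')
  qed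
  show ?thesis
  proof (intro allI impI, elim conjE)
    fix \<mu> \<nu> :: "'x measure"
    assume mu: "prob_borel \<mu>" and nu: "prob_borel \<nu>"
    have Tm: "(\<integral>x. f x \<partial>Tq q \<tau> \<mu>) = (\<integral>x. Bq q \<tau> f x \<partial>\<mu>)" if "continuous_on UNIV f" for f
      using Tprop[OF mu] that by blast
    have Tn: "(\<integral>x. f x \<partial>Tq q \<tau> \<nu>) = (\<integral>x. Bq q \<tau> f x \<partial>\<nu>)" if "continuous_on UNIV f" for f
      using Tprop[OF nu] that by blast
    show "dMK (Tq q \<tau> \<mu>) (Tq q \<tau> \<nu>) \<le> (s + r * t) * dMK \<mu> \<nu>"
      by (rule final_step[OF cX mu nu Cpos BL Tm Tn])
  qed
qed

end
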